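(* Let $A$ be a non-zero evolution algebra with natural basis $B=\{e_i:i\in\Lambda\}$, and let $\Lambda_m=\{i\in\Lambda: i\text{ is a modular index}\}$. Then $$\mathrm{Rad}(A)=\mathrm{lin}\{e_i:i\in\Lambda\setminus\Lambda_m\}.$$ In particular, $A$ is a radical algebra if and only if $\Lambda_m=\emptyset$, and $A$ is semisimple if and only if $\Lambda_m=\Lambda$.
   Context: An evolution algebra is an algebra $A$ over $\mathbb{K}\in\{\mathbb{R},\mathbb{C}\}$ with a basis $\{e_i:i\in\Lambda\}$ (natural basis) with $e_ie_j=0$ for $i\neq j$; write $e_j^2=\sum_k\omega_{kj}e_k$. An index $i_0$ is a modular index if $\omega_{i_0i_0}\neq0$ and $\omega_{i_0j}=0$ for all $j\neq i_0$. An ideal $M$ is modular if some $u\in A$ satisfies $a-au\in M$ for all $a\in A$. The Jacobson radical $\mathrm{Rad}(A)$ is the intersection of all maximal modular ideals (proper modular ideals maximal among proper modular ideals) of $A$, with $\mathrm{Rad}(A)=A$ if there are none. $A$ is semisimple if $\mathrm{Rad}(A)=\{0\}$ and a radical algebra if $\mathrm{Rad}(A)=A$. *)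

theory Defs
  imports Main "HOL-Library.Function_Algebras"
begin

text \<open>
Coordinate model of an evolution algebra with natural basis indexed by the type 'i
(the index set Lambda) over a field 'k.  An element of A is a finitely supported
coordinate function x :: 'i \<Rightarrow> 'k, representing the sum over i of x i e_i.
The structure constants are w k j, i.e. e_j^2 = sum over k of w k j e_k; each
column w (-) j must be finitely supported.
\<close>

definition evo_alg :: "('i \<Rightarrow> 'k::field) set" where
  "evo_alg = {x. finite {i. x i \<noteq> 0}}"

definition evo_basis :: "'i \<Rightarrow> ('i \<Rightarrow> 'k::field)" where
  "evo_basis i = (\<lambda>k. if k = i then 1 else 0)"

definition evo_mult :: "('i \<Rightarrow> 'i \<Rightarrow> 'k::field) \<Rightarrow> ('i \<Rightarrow> 'k) \<Rightarrow> ('i \<Rightarrow> 'k) \<Rightarrow> ('i \<Rightarrow> 'k)" where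
  "evo_mult w x y = (\<lambda>k. \<Sum>j\<in>{j. x j \<noteq> 0 \<and> y j \<noteq> 0}. x j * y j * w k j)"

definition modular_index :: "('i \<Rightarrow> 'i \<Rightarrow> 'k::field) \<Rightarrow> 'i \<Rightarrow> bool" where
  "modular_index w i0 \<longleftrightarrow> w i0 i0 \<noteq> 0 \<and> (\<forall>j. j \<noteq> i0 \<longrightarrow> w i0 j = 0)"

definition evo_ideal :: "('i \<Rightarrow> 'i \<Rightarrow> 'k::field) \<Rightarrow> ('i \<Rightarrow> 'k) set \<Rightarrow> bool" where
  "evo_ideal w M \<longleftrightarrow> M \<subseteq> evo_alg \<and> 0 \<in> M
     \<and> (\<forall>x\<in>M. \<forall>y\<in>M. x + y \<in> M)
     \<and> (\<forall>c. \<forall>x\<in>M. (\<lambda>k. c * x k) \<in> M)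
     \<and> (\<forall>a\<in>evo_alg. \<forall>m\<in>M. evo_mult w a m \<in> M \<and> evo_mult w m a \<in> M)"

definition modular_ideal :: "('i \<Rightarrow> 'i \<Rightarrow> 'k::field) \<Rightarrow> ('i \<Rightarrow> 'k) set \<Rightarrow> bool" where
  "modular_ideal w M \<longleftrightarrow> evo_ideal w M \<and>
     (\<exists>u\<in>evo_alg. \<forall>a\<in>evo_alg. a - evo_mult w a u \<in> M)"

definition maximal_modular_ideal :: "('i \<Rightarrow> 'i \<Rightarrow> 'k::field) \<Rightarrow> ('i \<Rightarrow> 'k) set \<Rightarrow> bool" where
  "maximal_modular_ideal w M \<longleftrightarrow> modular_ideal w M \<and> M \<noteq> evo_alg \<and>
     (\<forall>N. modular_ideal w N \<and> N \<noteq> evo_alg \<and> M \<subseteq> N \<longrightarrow> N = M)"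

definition jacobson_rad :: "('i \<Rightarrow> 'i \<Rightarrow> 'k::field) \<Rightarrow> ('i \<Rightarrow> 'k) set" where
  "jacobson_rad w = (if {M. maximal_modular_ideal w M} = {} then evo_alg
                     else \<Inter>{M. maximal_modular_ideal w M})"

definition lin_basis :: "'i set \<Rightarrow> ('i \<Rightarrow> 'k::field) set" where
  "lin_basis S = {x. \<exists>F c. finite F \<and> F \<subseteq> S \<and>
                        x = (\<lambda>k. \<Sum>i\<in>F. c i * evo_basis i k)}"

end

theory Submission
  imports Defs
begin

lemma evo_alg_add: "x \<in> evo_alg \<Longrightarrow> y \<in> evo_alg \<Longrightarrow> x + y \<in> evo_alg"
proof -
  assume a: "x \<in> evo_alg" "y \<in> evo_alg"
  have "{i. (x + y) i \<noteq> (0::'b::field)} \<subseteq> {i. x i \<noteq> 0} \<union> {i. y i \<noteq> 0}" by auto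
  then show ?thesis using a unfolding evo_alg_def by (auto intro: finite_subset)
qed

lemma evo_alg_scal: "x \<in> evo_alg \<Longrightarrow> (\<lambda>k. c * x k) \<in> evo_alg"
proof -
  assume a: "x \<in> evo_alg"
  have "{i. c * x i \<noteq> (0::'b::field)} \<subseteq> {i. x i \<noteq> 0}" by auto
  then show ?thesis using a unfolding evo_alg_def by (auto intro: finite_subset)
qed

lemma evo_alg_diff: "x \<in> evo_alg \<Longrightarrow> y \<in> evo_alg \<Longrightarrow> x - y \<in> evo_alg"
proof -
  assume a: "x \<in> evo_alg" "y \<in> evo_alg"
  have "{i. (x - y) i \<noteq> (0::'b::field)} \<subseteq> {i. x i \<noteq> 0} \<union> {i. y i \<noteq> 0}" by auto
  then show ?thesis using a unfolding evo_alg_def by (auto intro: finite_subset)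
qed

lemma evo_alg_zero: "0 \<in> evo_alg"
  unfolding evo_alg_def by simp

lemma evo_basis_alg: "evo_basis i \<in> evo_alg"
proof -
  have "{k. evo_basis i k \<noteq> (0::'b::field)} = {i}" by (auto simp: evo_basis_def)
  then show ?thesis unfolding evo_alg_def by simp
qed

lemma evo_mult_eq:
  assumes "finite F" "{j. x j \<noteq> 0 \<and> y j \<noteq> 0} \<subseteq> F"
  shows "evo_mult w x y k = (\<Sum>j\<in>F. x j * y j * w k j)"
  unfolding evo_mult_def by (rule sum.mono_neutral_left) (use assms in auto)

lemma evo_mult_comm: "evo_mult w x y = evo_mult w y x"
  unfolding evo_mult_def by (simp add: conj_commute mult.commute)

lemma evo_mult_add_left:
  assumes "x \<in> evo_alg" "y \<in> evo_alg"
  shows "evo_mult w (x + y) z = evo_mult w x z + evo_mult w y z"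
proof (rule ext)
  fix k
  let ?F = "{j. x j \<noteq> 0} \<union> {j. y j \<noteq> 0}"
  have f: "finite ?F" using assms by (auto simp: evo_alg_def)
  have "evo_mult w (x+y) z k = (\<Sum>j\<in>?F. (x+y) j * z j * w k j)" by (rule evo_mult_eq[OF f]) auto
  also have "\<dots> = (\<Sum>j\<in>?F. x j * z j * w k j) + (\<Sum>j\<in>?F. y j * z j * w k j)"
    by (simp add: sum.distrib algebra_simps)
  also have "\<dots> = evo_mult w x z k + evo_mult w y z k"
  proof -
    have "evo_mult w x z k = (\<Sum>j\<in>?F. x j * z j * w k j)" by (rule evo_mult_eq[OF f]) auto
    moreover have "evo_mult w y z k = (\<Sum>j\<in>?F. y j * z j * w k j)" by (rule evo_mult_eq[OF f]) auto
    ultimately show ?thesis by simp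
  qed
  finally show "evo_mult w (x + y) z k = (evo_mult w x z + evo_mult w y z) k" by simp
qed

lemma evo_mult_scal_left:
  assumes "x \<in> evo_alg"
  shows "evo_mult w (\<lambda>k. c * x k) z = (\<lambda>k. c * evo_mult w x z k)"
proof (rule ext)
  fix k
  let ?F = "{j. x j \<noteq> 0}"
  have f: "finite ?F" using assms by (auto simp: evo_alg_def)
  have "evo_mult w (\<lambda>k. c * x k) z k = (\<Sum>j\<in>?F. (c * x j) * z j * w k j)" by (rule evo_mult_eq[OF f]) auto
  also have "\<dots> = c * (\<Sum>j\<in>?F. x j * z j * w k j)"
    by (simp add: sum_distrib_left algebra_simps)
  also have "\<dots> = c * evo_mult w x z k"
  proof -
    have "evo_mult w x z k = (\<Sum>j\<in>?F. x j * z j * w k j)" by (rule evo_mult_eq[OF f]) auto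
    then show ?thesis by simp
  qed
  finally show "evo_mult w (\<lambda>k. c * x k) z k = c * evo_mult w x z k" .
qed

lemma evo_mult_basis: "evo_mult w (evo_basis i) y = (\<lambda>k. y i * w k i)"
proof (rule ext)
  fix k
  have "evo_mult w (evo_basis i) y k = (\<Sum>j\<in>{i}. evo_basis i j * y j * w k j)"
    by (rule evo_mult_eq) (auto simp: evo_basis_def split: if_splits)
  then show "evo_mult w (evo_basis i) y k = y i * w k i" by (simp add: evo_basis_def)
qed

lemma evo_mult_closed:
  assumes fin: "\<forall>j. finite {k. w k j \<noteq> 0}" and "x \<in> evo_alg"
  shows "evo_mult w x y \<in> evo_alg"
proof -
  have "{k. evo_mult w x y k \<noteq> 0} \<subseteq> (\<Union>j\<in>{j. x j \<noteq> 0}. {k. w k j \<noteq> 0})"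
  proof
    fix k assume k: "k \<in> {k. evo_mult w x y k \<noteq> 0}"
    show "k \<in> (\<Union>j\<in>{j. x j \<noteq> 0}. {k. w k j \<noteq> 0})"
    proof (rule ccontr)
      assume "k \<notin> (\<Union>j\<in>{j. x j \<noteq> 0}. {k. w k j \<noteq> 0})"
      then have "evo_mult w x y k = 0" unfolding evo_mult_def by (intro sum.neutral) auto
      then show False using k by simp
    qed
  qed
  moreover have "finite (\<Union>j\<in>{j. x j \<noteq> 0}. {k. w k j \<noteq> 0})"
    using assms by (auto simp: evo_alg_def)
  ultimately show ?thesis unfolding evo_alg_def by (auto intro: finite_subset)
qed

lemma ideal_diff:
  assumes "evo_ideal w M" "x \<in> M" "y \<in> M"
  shows "x - y \<in> M"
proof -
  have "(\<lambda>k. (-1) * y k) \<in> M" using assms unfolding evo_ideal_def by blast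
  then have "x + (\<lambda>k. (-1) * y k) \<in> M" using assms unfolding evo_ideal_def by blast
  moreover have "x + (\<lambda>k. (-1) * y k) = x - y" by (simp add: fun_eq_iff)
  ultimately show ?thesis by simp
qed

lemma ideal_span:
  assumes "evo_ideal w M" "finite F" "\<forall>i\<in>F. evo_basis i \<in> M"
  shows "(\<lambda>k. \<Sum>i\<in>F. c i * evo_basis i k) \<in> M"
  using assms(2,3)
proof (induction F rule: finite_induct)
  case empty
  then show ?case using assms(1) unfolding evo_ideal_def by (simp add: zero_fun_def)
next
  case (insert a F)
  have "(\<lambda>k. c a * evo_basis a k) \<in> M" using insert assms(1) unfolding evo_ideal_def by blast
  moreover have "(\<lambda>k. \<Sum>i\<in>F. c i * evo_basis i k) \<in> M" using insert by blast
  ultimately have "(\<lambda>k. c a * evo_basis a k) + (\<lambda>k. \<Sum>i\<in>F. c i * evo_basis i k) \<in> M"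
    using assms(1) unfolding evo_ideal_def by blast
  then show ?case using insert by (simp add: plus_fun_def)
qed

lemma expansion:
  assumes "x \<in> evo_alg"
  shows "x = (\<lambda>k. \<Sum>i\<in>{i. x i \<noteq> 0}. x i * evo_basis i k)"
proof (rule ext)
  fix k
  show "x k = (\<Sum>i\<in>{i. x i \<noteq> 0}. x i * evo_basis i k)"
    using assms by (simp add: evo_basis_def evo_alg_def if_distrib sum.delta' cong: if_cong)
qed


lemma ideal_sub: "evo_ideal w M \<Longrightarrow> M \<subseteq> evo_alg" by (simp add: evo_ideal_def)
lemma ideal_add: "evo_ideal w M \<Longrightarrow> x \<in> M \<Longrightarrow> y \<in> M \<Longrightarrow> x + y \<in> M" by (simp add: evo_ideal_def)
lemma ideal_scal: "evo_ideal w M \<Longrightarrow> x \<in> M \<Longrightarrow> (\<lambda>k. c * x k) \<in> M" by (simp add: evo_ideal_def)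
lemma ideal_zero: "evo_ideal w M \<Longrightarrow> 0 \<in> M" by (simp add: evo_ideal_def)
lemma ideal_multl: "evo_ideal w M \<Longrightarrow> a \<in> evo_alg \<Longrightarrow> m \<in> M \<Longrightarrow> evo_mult w a m \<in> M" by (simp add: evo_ideal_def)
lemma ideal_multr: "evo_ideal w M \<Longrightarrow> a \<in> evo_alg \<Longrightarrow> m \<in> M \<Longrightarrow> evo_mult w m a \<in> M" by (simp add: evo_ideal_def)

lemma P_ideal:
  fixes w :: "'i \<Rightarrow> 'i \<Rightarrow> 'k::field"
  assumes fin: "\<forall>j. finite {k. w k j \<noteq> 0}" and mi: "modular_index w i0"
  shows "evo_ideal w {x\<in>evo_alg. x i0 = 0}"
proof -
  have m0: "evo_mult w a m i0 = 0" if "m i0 = 0" for a m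
    unfolding evo_mult_def using mi that
    by (intro sum.neutral) (auto simp: modular_index_def)
  show ?thesis unfolding evo_ideal_def
  proof (intro conjI ballI allI)
    show "{x \<in> evo_alg. x i0 = 0} \<subseteq> evo_alg" by auto
    show "0 \<in> {x \<in> evo_alg. x i0 = 0}" using evo_alg_zero by simp
  next
    fix x y assume "x \<in> {x \<in> evo_alg. x i0 = (0::'k)}" "y \<in> {x \<in> evo_alg. x i0 = (0::'k)}"
    then show "x + y \<in> {x \<in> evo_alg. x i0 = 0}" by (auto intro: evo_alg_add)
  next
    fix c x assume "x \<in> {x \<in> evo_alg. x i0 = (0::'k)}"
    then show "(\<lambda>k. c * x k) \<in> {x \<in> evo_alg. x i0 = 0}" by (auto intro: evo_alg_scal)
  next
    fix a m :: "'i \<Rightarrow> 'k" assume a: "a \<in> evo_alg" and m: "m \<in> {x \<in> evo_alg. x i0 = (0::'k)}"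
    have "evo_mult w a m \<in> evo_alg" using evo_mult_closed[OF fin a] .
    moreover have "evo_mult w a m i0 = 0" using m m0 by auto
    ultimately show "evo_mult w a m \<in> {x \<in> evo_alg. x i0 = 0}" by simp
  next
    fix a m :: "'i \<Rightarrow> 'k" assume a: "a \<in> evo_alg" and m: "m \<in> {x \<in> evo_alg. x i0 = (0::'k)}"
    have "evo_mult w m a \<in> evo_alg" using evo_mult_closed[OF fin] m by auto
    moreover have "evo_mult w m a i0 = 0" unfolding evo_mult_comm[of w m a] using m m0 by auto
    ultimately show "evo_mult w m a \<in> {x \<in> evo_alg. x i0 = 0}" by simp
  qed
qed

lemma P_maximal:
  fixes w :: "'i \<Rightarrow> 'i \<Rightarrow> 'k::field"
  assumes fin: "\<forall>j. finite {k. w k j \<noteq> 0}" and mi: "modular_index w i0"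
  shows "maximal_modular_ideal w {x\<in>evo_alg. x i0 = 0}"
proof -
  let ?P = "{x\<in>evo_alg. x i0 = (0::'k)}"
  have id: "evo_ideal w ?P" using P_ideal[OF fin mi] .
  have wne: "w i0 i0 \<noteq> 0" using mi by (simp add: modular_index_def)
  define u where "u = (\<lambda>k. (1 / w i0 i0) * evo_basis i0 k)"
  have u: "u \<in> evo_alg" unfolding u_def by (rule evo_alg_scal[OF evo_basis_alg])
  have "a - evo_mult w a u \<in> ?P" if a: "a \<in> evo_alg" for a :: "'i \<Rightarrow> 'k"
  proof -
    have "evo_mult w a u = evo_mult w u a" by (rule evo_mult_comm)
    also have "\<dots> = (\<lambda>k. (1 / w i0 i0) * (a i0 * w k i0))"
      unfolding u_def by (subst evo_mult_scal_left[OF evo_basis_alg]) (simp add: evo_mult_basis)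
    finally have e: "evo_mult w a u = (\<lambda>k. (1 / w i0 i0) * (a i0 * w k i0))" .
    have "evo_mult w a u \<in> evo_alg" by (rule evo_mult_closed[OF fin a])
    then have "a - evo_mult w a u \<in> evo_alg" using a by (rule evo_alg_diff[rotated])
    moreover have "(a - evo_mult w a u) i0 = 0" using wne by (simp add: e)
    ultimately show ?thesis by simp
  qed
  then have mod: "modular_ideal w ?P" unfolding modular_ideal_def using id u by blast
  have ne: "?P \<noteq> evo_alg"
  proof
    assume h: "?P = evo_alg"
    have "evo_basis i0 \<in> (evo_alg::('i\<Rightarrow>'k) set)" by (rule evo_basis_alg)
    then have "evo_basis i0 \<in> ?P" using equalityD2[OF h] by (rule subsetD[rotated])
    then have "evo_basis i0 i0 = (0::'k)" by simp
    then show False by (simp add: evo_basis_def)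
  qed
  have mx: "N = ?P" if N: "modular_ideal w N" "N \<noteq> evo_alg" "?P \<subseteq> N" for N
  proof -
    have Nid: "evo_ideal w N" using N(1) by (simp add: modular_ideal_def)
    have "N \<subseteq> ?P"
    proof
      fix x assume x: "x \<in> N"
      have xa: "x \<in> evo_alg" using x ideal_sub[OF Nid] by blast
      show "x \<in> ?P"
      proof (rule ccontr)
        assume "x \<notin> ?P"
        then have xi: "x i0 \<noteq> 0" using xa by simp
        have "evo_alg \<subseteq> N"
        proof
          fix a :: "'i \<Rightarrow> 'k" assume a: "a \<in> evo_alg"
          let ?y = "(\<lambda>k. (a i0 / x i0) * x k)"
          have y: "?y \<in> N" using x Nid by (rule ideal_scal[rotated])
          have "?y \<in> evo_alg" using evo_alg_scal[OF xa] .
          then have "a - ?y \<in> evo_alg" using a by (intro evo_alg_diff)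
          moreover have "(a - ?y) i0 = 0" using xi by simp
          ultimately have "a - ?y \<in> ?P" by simp
          then have "a - ?y \<in> N" using N(3) by blast
          then have "(a - ?y) + ?y \<in> N" using y Nid by (intro ideal_add)
          moreover have "(a - ?y) + ?y = a" by (rule diff_add_cancel)
          ultimately show "a \<in> N" by simp
        qed
        then show False using N(2) ideal_sub[OF Nid] by blast
      qed
    qed
    then show ?thesis using N(3) by blast
  qed
  show ?thesis unfolding maximal_modular_ideal_def using mod ne mx by blast
qed


lemma maximal_is_P:
  fixes w :: "'i \<Rightarrow> 'i \<Rightarrow> 'k::field"
  assumes fin: "\<forall>j. finite {k. w k j \<noteq> 0}" and M: "maximal_modular_ideal w M"
  shows "\<exists>i0. modular_index w i0 \<and> M = {x\<in>evo_alg. x i0 = 0}"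
proof -
  have Mmod: "modular_ideal w M" and Mne: "M \<noteq> evo_alg"
    and Mmax: "\<And>N. modular_ideal w N \<Longrightarrow> N \<noteq> evo_alg \<Longrightarrow> M \<subseteq> N \<Longrightarrow> N = M"
    using M unfolding maximal_modular_ideal_def by blast+
  have Mid: "evo_ideal w M" using Mmod by (simp add: modular_ideal_def)
  obtain u where u: "u \<in> evo_alg" and hu: "\<And>a. a \<in> evo_alg \<Longrightarrow> a - evo_mult w a u \<in> M"
    using Mmod unfolding modular_ideal_def by blast
  have "\<exists>i0. evo_basis i0 \<notin> M"
  proof (rule ccontr)
    assume "\<not> (\<exists>i0. evo_basis i0 \<notin> M)"
    then have all: "\<forall>i. evo_basis i \<in> M" by blast
    have "evo_alg \<subseteq> M"
    proof
      fix x :: "'i \<Rightarrow> 'k" assume x: "x \<in> evo_alg"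
      have "(\<lambda>k. \<Sum>i\<in>{i. x i \<noteq> 0}. x i * evo_basis i k) \<in> M"
        using x all by (intro ideal_span[OF Mid]) (auto simp: evo_alg_def)
      then show "x \<in> M" using expansion[OF x] by simp
    qed
    then show False using Mne ideal_sub[OF Mid] by blast
  qed
  then obtain i0 where i0: "evo_basis i0 \<notin> M" by blast
  let ?e = "evo_basis i0 :: 'i \<Rightarrow> 'k"
  define m0 where "m0 = ?e - evo_mult w ?e u"
  have m0M: "m0 \<in> M" unfolding m0_def by (rule hu[OF evo_basis_alg])
  have m0e: "m0 = ?e - (\<lambda>k. u i0 * w k i0)" unfolding m0_def by (simp add: evo_mult_basis)
  have em: "?e = m0 + (\<lambda>k. u i0 * w k i0)" using m0e by (simp add: fun_eq_iff)
  have ui: "u i0 \<noteq> 0"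
  proof
    assume "u i0 = 0"
    then have "?e = m0" using em by (simp add: fun_eq_iff)
    then show False using m0M i0 by simp
  qed
  have colM: "(\<lambda>k. c * w k i0) \<notin> M" if c: "c \<noteq> 0" for c
  proof
    assume "(\<lambda>k. c * w k i0) \<in> M"
    then have "(\<lambda>k. (u i0 / c) * (c * w k i0)) \<in> M" by (rule ideal_scal[OF Mid])
    moreover have "(\<lambda>k. (u i0 / c) * (c * w k i0)) = (\<lambda>k. u i0 * w k i0)" using c by (simp add: fun_eq_iff)
    ultimately have "(\<lambda>k. u i0 * w k i0) \<in> M" by simp
    then have "m0 + (\<lambda>k. u i0 * w k i0) \<in> M" using m0M by (intro ideal_add[OF Mid])
    then show False using em i0 by simp
  qed
  have MP: "M \<subseteq> {x\<in>evo_alg. x i0 = 0}"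
  proof
    fix x :: "'i \<Rightarrow> 'k" assume x: "x \<in> M"
    have "evo_mult w ?e x \<in> M" using x by (intro ideal_multl[OF Mid evo_basis_alg])
    then have "(\<lambda>k. x i0 * w k i0) \<in> M" by (simp add: evo_mult_basis)
    then have "x i0 = 0" using colM by blast
    then show "x \<in> {x\<in>evo_alg. x i0 = 0}" using x ideal_sub[OF Mid] by blast
  qed
  have colform: "(\<lambda>k. d * w k i0) = (\<lambda>k. (- d / u i0) * m0 k) + (\<lambda>k. (d / u i0) * ?e k)" for d
    using ui by (simp add: fun_eq_iff m0e field_simps)
  define N where "N = {x. \<exists>m\<in>M. \<exists>c. x = m + (\<lambda>k. c * ?e k)}"
  have MN: "M \<subseteq> N" unfolding N_def
  proof
    fix m :: "'i \<Rightarrow> 'k" assume "m \<in> M"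
    then show "m \<in> {x. \<exists>m\<in>M. \<exists>c. x = m + (\<lambda>k. c * ?e k)}"
      by (intro CollectI bexI[of _ m] exI[of _ 0]) (auto simp: fun_eq_iff)
  qed
  have eN: "?e \<in> N" unfolding N_def
    by (intro CollectI bexI[of _ 0] exI[of _ 1] ideal_zero[OF Mid]) (simp add: fun_eq_iff)
  have key: "evo_mult w x a \<in> N" if a: "a \<in> evo_alg" and "x \<in> N" for a x :: "'i \<Rightarrow> 'k"
  proof -
    from \<open>x \<in> N\<close> obtain m c where m: "m \<in> M" and x: "x = m + (\<lambda>k. c * ?e k)" unfolding N_def by blast
    have ma: "m \<in> evo_alg" using m ideal_sub[OF Mid] by blast
    have "evo_mult w x a = evo_mult w m a + evo_mult w (\<lambda>k. c * ?e k) a"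
      unfolding x by (rule evo_mult_add_left[OF ma evo_alg_scal[OF evo_basis_alg]])
    also have "evo_mult w (\<lambda>k. c * ?e k) a = (\<lambda>k. c * (a i0 * w k i0))"
      by (simp add: evo_mult_scal_left[OF evo_basis_alg] evo_mult_basis)
    also have "\<dots> = (\<lambda>k. (c * a i0) * w k i0)" by (simp add: fun_eq_iff)
    also have "\<dots> = (\<lambda>k. (- (c * a i0) / u i0) * m0 k) + (\<lambda>k. ((c * a i0) / u i0) * ?e k)"
      by (rule colform)
    finally have eq: "evo_mult w x a = (evo_mult w m a + (\<lambda>k. (- (c * a i0) / u i0) * m0 k)) + (\<lambda>k. ((c * a i0) / u i0) * ?e k)"
      by (simp add: add.assoc fun_eq_iff)
    have "evo_mult w m a + (\<lambda>k. (- (c * a i0) / u i0) * m0 k) \<in> M"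
      using m a m0M by (intro ideal_add[OF Mid] ideal_multr[OF Mid] ideal_scal[OF Mid])
    then show "evo_mult w x a \<in> N" unfolding N_def eq by blast
  qed
  have Nid: "evo_ideal w N" unfolding evo_ideal_def
  proof (intro conjI ballI allI)
    show "N \<subseteq> evo_alg"
    proof
      fix x :: "'i \<Rightarrow> 'k" assume "x \<in> N"
      then obtain m c where m: "m \<in> M" and x: "x = m + (\<lambda>k. c * ?e k)" unfolding N_def by blast
      show "x \<in> evo_alg" unfolding x using m ideal_sub[OF Mid]
        by (intro evo_alg_add evo_alg_scal evo_basis_alg) auto
    qed
    show "0 \<in> N" unfolding N_def
      by (intro CollectI bexI[of _ 0] exI[of _ 0] ideal_zero[OF Mid]) (simp add: fun_eq_iff)
  next
    fix x y :: "'i \<Rightarrow> 'k" assume "x \<in> N" "y \<in> N"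
    then obtain m c m' c' where m: "m \<in> M" "x = m + (\<lambda>k. c * ?e k)"
      and m': "m' \<in> M" "y = m' + (\<lambda>k. c' * ?e k)" unfolding N_def by blast
    have "m + m' \<in> M" using m m' by (intro ideal_add[OF Mid])
    moreover have "x + y = (m + m') + (\<lambda>k. (c + c') * ?e k)" using m m' by (simp add: fun_eq_iff algebra_simps)
    ultimately show "x + y \<in> N" unfolding N_def by blast
  next
    fix d and x :: "'i \<Rightarrow> 'k" assume "x \<in> N"
    then obtain m c where m: "m \<in> M" "x = m + (\<lambda>k. c * ?e k)" unfolding N_def by blast
    have "(\<lambda>k. d * m k) \<in> M" using m by (intro ideal_scal[OF Mid])
    moreover have "(\<lambda>k. d * x k) = (\<lambda>k. d * m k) + (\<lambda>k. (d * c) * ?e k)" using m by (simp add: fun_eq_iff algebra_simps)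
    ultimately show "(\<lambda>k. d * x k) \<in> N" unfolding N_def by blast
  next
    fix a x :: "'i \<Rightarrow> 'k" assume "a \<in> evo_alg" "x \<in> N"
    then show "evo_mult w a x \<in> N" unfolding evo_mult_comm[of w a x] using key by blast
  next
    fix a x :: "'i \<Rightarrow> 'k" assume "a \<in> evo_alg" "x \<in> N"
    then show "evo_mult w x a \<in> N" using key by blast
  qed
  have Nmod: "modular_ideal w N" unfolding modular_ideal_def using Nid u hu MN by blast
  have NA: "N = evo_alg"
  proof (rule ccontr)
    assume "N \<noteq> evo_alg"
    then have "N = M" using Mmax[OF Nmod] MN by blast
    then show False using eN i0 by simp
  qed
  have offdiag: "w i0 j = 0" if j: "j \<noteq> i0" for j
  proof -
    have "evo_basis j \<in> N" unfolding NA by (rule evo_basis_alg)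
    then obtain m c where m: "m \<in> M" and ej: "evo_basis j = m + (\<lambda>k. c * ?e k)" unfolding N_def by blast
    have "evo_basis j j = m j + c * ?e j" using ej by (simp add: fun_eq_iff)
    then have mj: "m j = 1" using j by (simp add: evo_basis_def)
    have "evo_mult w (evo_basis j) m \<in> M" using m by (intro ideal_multl[OF Mid evo_basis_alg])
    then have "(\<lambda>k. w k j) \<in> M" using mj by (simp add: evo_mult_basis)
    then show ?thesis using MP by blast
  qed
  have "m0 i0 = 0" using m0M MP by blast
  then have "1 - u i0 * w i0 i0 = 0" using m0e by (simp add: evo_basis_def)
  then have "w i0 i0 \<noteq> 0" by auto
  then have mi: "modular_index w i0" using offdiag by (simp add: modular_index_def)
  have Pmax: "maximal_modular_ideal w {x\<in>evo_alg. x i0 = 0}" by (rule P_maximal[OF fin mi])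
  have "{x\<in>evo_alg. x i0 = 0} = M"
    using Pmax MP by (intro Mmax) (auto simp: maximal_modular_ideal_def)
  then show ?thesis using mi by blast
qed


lemma rad_char:
  fixes w :: "'i \<Rightarrow> 'i \<Rightarrow> 'k::field"
  assumes fin: "\<forall>j. finite {k. w k j \<noteq> 0}"
  shows "jacobson_rad w = {x\<in>evo_alg. \<forall>i. modular_index w i \<longrightarrow> x i = 0}"
proof (cases "\<exists>i. modular_index w i")
  case False
  then have "{M. maximal_modular_ideal w M} = {}" using maximal_is_P[OF fin] by blast
  then show ?thesis using False unfolding jacobson_rad_def by simp
next
  case True
  then obtain i1 where i1: "modular_index w i1" by blast
  have ne: "{M. maximal_modular_ideal w M} \<noteq> {}" using P_maximal[OF fin i1] by blast
  have eq: "{M. maximal_modular_ideal w M} = (\<lambda>i. {x\<in>evo_alg. x i = (0::'k)}) ` {i. modular_index w i}"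
  proof
    show "{M. maximal_modular_ideal w M} \<subseteq> (\<lambda>i. {x\<in>evo_alg. x i = (0::'k)}) ` {i. modular_index w i}"
      using maximal_is_P[OF fin] by blast
    show "(\<lambda>i. {x\<in>evo_alg. x i = (0::'k)}) ` {i. modular_index w i} \<subseteq> {M. maximal_modular_ideal w M}"
      using P_maximal[OF fin] by blast
  qed
  have "jacobson_rad w = \<Inter>{M. maximal_modular_ideal w M}" unfolding jacobson_rad_def by (rule if_not_P[OF ne])
  also have "\<dots> = {x\<in>evo_alg. \<forall>i. modular_index w i \<longrightarrow> x i = 0}"
    unfolding eq using i1 by auto
  finally show ?thesis .
qed

lemma lin_char:
  "lin_basis S = {x\<in>(evo_alg::('i \<Rightarrow> 'k::field) set). \<forall>i. i \<notin> S \<longrightarrow> x i = 0}"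
proof
  show "lin_basis S \<subseteq> {x\<in>(evo_alg::('i \<Rightarrow> 'k::field) set). \<forall>i. i \<notin> S \<longrightarrow> x i = 0}"
  proof
    fix x :: "'i \<Rightarrow> 'k" assume "x \<in> lin_basis S"
    then obtain F c where F: "finite F" "F \<subseteq> S" and x: "x = (\<lambda>k. \<Sum>i\<in>F. c i * evo_basis i k)"
      unfolding lin_basis_def by blast
    have xf: "x = (\<lambda>k. if k \<in> F then c k else 0)"
      unfolding x by (rule ext) (use F(1) in \<open>simp add: evo_basis_def if_distrib sum.delta' cong: if_cong\<close>)
    have "{k. x k \<noteq> 0} \<subseteq> F" unfolding xf by auto
    then have "x \<in> evo_alg" unfolding evo_alg_def using F(1) by (auto intro: finite_subset)
    moreover have "\<forall>i. i \<notin> S \<longrightarrow> x i = 0" using F(2) unfolding xf by auto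
    ultimately show "x \<in> {x\<in>evo_alg. \<forall>i. i \<notin> S \<longrightarrow> x i = 0}" by simp
  qed
  show "{x\<in>(evo_alg::('i \<Rightarrow> 'k::field) set). \<forall>i. i \<notin> S \<longrightarrow> x i = 0} \<subseteq> lin_basis S"
  proof
    fix x :: "'i \<Rightarrow> 'k" assume x: "x \<in> {x\<in>evo_alg. \<forall>i. i \<notin> S \<longrightarrow> x i = 0}"
    then have xa: "x \<in> evo_alg" by simp
    have "finite {i. x i \<noteq> 0}" "{i. x i \<noteq> 0} \<subseteq> S" using x by (auto simp: evo_alg_def)
    then show "x \<in> lin_basis S" unfolding lin_basis_def using expansion[OF xa] by blast
  qed
qed

theorem corollary3p13:
  fixes w :: "'i \<Rightarrow> 'i \<Rightarrow> 'k::field"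
  assumes "\<forall>j. finite {k. w k j \<noteq> 0}"
  shows "jacobson_rad w = lin_basis {i. \<not> modular_index w i}
         \<and> (jacobson_rad w = evo_alg \<longleftrightarrow> {i. modular_index w i} = {})
         \<and> (jacobson_rad w = {0} \<longleftrightarrow> {i. modular_index w i} = UNIV)"
proof -
  have R: "jacobson_rad w = {x\<in>evo_alg. \<forall>i. modular_index w i \<longrightarrow> x i = 0}"
    by (rule rad_char[OF assms])
  have P1: "jacobson_rad w = lin_basis {i. \<not> modular_index w i}"
    unfolding R lin_char by simp
  have P2: "jacobson_rad w = evo_alg \<longleftrightarrow> {i. modular_index w i} = {}"
  proof
    assume h: "jacobson_rad w = evo_alg"
    show "{i. modular_index w i} = {}"
    proof (rule ccontr)
      assume "{i. modular_index w i} \<noteq> {}"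
      then obtain i where i: "modular_index w i" by blast
      have "evo_basis i \<in> jacobson_rad w" unfolding h by (rule evo_basis_alg)
      then have "evo_basis i i = (0::'k)" using i unfolding R by blast
      then show False by (simp add: evo_basis_def)
    qed
  next
    assume "{i. modular_index w i} = {}"
    then show "jacobson_rad w = evo_alg" unfolding R by auto
  qed
  have P3: "jacobson_rad w = {0} \<longleftrightarrow> {i. modular_index w i} = UNIV"
  proof
    assume h: "jacobson_rad w = {0}"
    show "{i. modular_index w i} = UNIV"
    proof (rule ccontr)
      assume "{i. modular_index w i} \<noteq> UNIV"
      then obtain j where j: "\<not> modular_index w j" by blast
      have "evo_basis j \<in> jacobson_rad w" unfolding R using j evo_basis_alg
        by (auto simp: evo_basis_def)
      then have "evo_basis j = (0::'i \<Rightarrow> 'k)" unfolding h by simp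
      then have "evo_basis j j = (0::'k)" by simp
      then show False by (simp add: evo_basis_def)
    qed
  next
    assume "{i. modular_index w i} = UNIV"
    then have "\<forall>i. modular_index w i" by blast
    then show "jacobson_rad w = {0}" unfolding R using evo_alg_zero by (auto simp: fun_eq_iff)
  qed
  show ?thesis using P1 P2 P3 by blast
qed

end
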